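(* Let $L\subset\mathbb{R}$ be a Galois extension of $\mathbb{Q}$ with cyclic Galois group of order $4$ generated by $\sigma$, let $l$ be its unique quadratic subfield with fundamental unit $u_l>1$, and let $u_0\in\mathcal{O}_L^*$ with $u_0\ne\pm1$ and $N_{L/l}(u_0)=u_0\sigma^2(u_0)=\pm1$. Put $W_1=\log u_l$, $W_2=\log|u_0|$, $W_3=\log|\sigma(u_0)|$. For integers $n_1,n_2,n_3$ let $w=n_1\operatorname{LOG}(u_l)\wedge\operatorname{LOG}(u_0)+n_2\operatorname{LOG}(u_l)\wedge\operatorname{LOG}(\sigma(u_0))+n_3\operatorname{LOG}(u_0)\wedge\operatorname{LOG}(\sigma(u_0))$. Then (i) $\|w\|_1\ge 4|n_3|(W_2^2+W_3^2)$; and (ii) if $(n_1,n_2)\ne(0,0)$, then $\|w\|_1\ge 2W_1\big(2\max\{|W_2|,|W_3|\}+|W_2|+|W_3|\big)$.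
   Context: For a totally real number field $L$, $\operatorname{LOG}:\mathcal{O}_L^*\to\mathbb{R}^{\mathcal{A}_L}$, $\operatorname{LOG}(\gamma)=(\log|\tau(\gamma)|)_\tau$, indexed by the real embeddings $\tau$ of $L$. With the standard orthonormal basis $\{\delta^v\}$ of $\mathbb{R}^{\mathcal{A}_L}$ and $\delta^I=\delta^{v_1}\wedge\cdots\wedge\delta^{v_j}$ for $j$-subsets $I$, the 1-norm of $w=\sum_I c_I\delta^I\in\bigwedge^j\mathbb{R}^{\mathcal{A}_L}$ is $\|w\|_1=\sum_I|c_I|$. *)

theory Defs
  imports Complex_Main "HOL-Computational_Algebra.Polynomial"
begin

definition real_subfield :: "real set \<Rightarrow> bool" where
  "real_subfield K \<longleftrightarrow> 0 \<in> K \<and> 1 \<in> K \<and>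
     (\<forall>x\<in>K. \<forall>y\<in>K. x + y \<in> K \<and> x * y \<in> K) \<and>
     (\<forall>x\<in>K. - x \<in> K) \<and> (\<forall>x\<in>K. x \<noteq> 0 \<longrightarrow> inverse x \<in> K)"

definition rat_dim :: "real set \<Rightarrow> nat \<Rightarrow> bool" where
  "rat_dim K d \<longleftrightarrow> (\<exists>b::nat \<Rightarrow> real.
     (\<forall>i<d. b i \<in> K) \<and>
     (\<forall>q. (\<forall>i<d. q i \<in> \<rat>) \<and> (\<Sum>i<d. q i * b i) = 0 \<longrightarrow> (\<forall>i<d. q i = 0)) \<and>
     K = {(\<Sum>i<d. q i * b i) | q. \<forall>i<d. q i \<in> \<rat>})"

definition field_aut :: "real set \<Rightarrow> (real \<Rightarrow> real) \<Rightarrow> bool" where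
  "field_aut K g \<longleftrightarrow> bij_betw g K K \<and> g 1 = 1 \<and>
     (\<forall>x\<in>K. \<forall>y\<in>K. g (x + y) = g x + g y \<and> g (x * y) = g x * g y)"

definition alg_int :: "real \<Rightarrow> bool" where
  "alg_int x \<longleftrightarrow> (\<exists>p :: int poly. lead_coeff p = 1 \<and> poly (map_poly of_int p) x = 0)"

definition int_unit :: "real set \<Rightarrow> real \<Rightarrow> bool" where
  "int_unit K x \<longleftrightarrow> x \<in> K \<and> x \<noteq> 0 \<and> alg_int x \<and> alg_int (inverse x)"

text \<open>LOG vector, indexed by the embeddings sigma^k, k < 4, of a cyclic quartic field.\<close>
definition LOG4 :: "(real \<Rightarrow> real) \<Rightarrow> real \<Rightarrow> nat \<Rightarrow> real" where
  "LOG4 \<sigma> \<gamma> k = ln \<bar>(\<sigma> ^^ k) \<gamma>\<bar>"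

text \<open>Coefficient of the basis 2-vector delta^i wedge delta^j (i < j) in a wedge b.\<close>
definition wedge :: "(nat \<Rightarrow> real) \<Rightarrow> (nat \<Rightarrow> real) \<Rightarrow> nat \<Rightarrow> nat \<Rightarrow> real" where
  "wedge a b i j = a i * b j - a j * b i"

definition norm1_2 :: "nat \<Rightarrow> (nat \<Rightarrow> nat \<Rightarrow> real) \<Rightarrow> real" where
  "norm1_2 n c = (\<Sum>(i, j) \<in> {(i, j). i < j \<and> j < n}. \<bar>c i j\<bar>)"

end

theory Submission imports Defs begin

lemma sf_add: "real_subfield L \<Longrightarrow> x \<in> L \<Longrightarrow> y \<in> L \<Longrightarrow> x + y \<in> L"
  unfolding real_subfield_def by auto
lemma sf_mult: "real_subfield L \<Longrightarrow> x \<in> L \<Longrightarrow> y \<in> L \<Longrightarrow> x * y \<in> L"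
  unfolding real_subfield_def by auto
lemma sf_neg: "real_subfield L \<Longrightarrow> x \<in> L \<Longrightarrow> - x \<in> L"
  unfolding real_subfield_def by auto
lemma sf_0: "real_subfield L \<Longrightarrow> 0 \<in> L"
  unfolding real_subfield_def by auto
lemma sf_1: "real_subfield L \<Longrightarrow> 1 \<in> L"
  unfolding real_subfield_def by auto
lemma sf_inv: "real_subfield L \<Longrightarrow> x \<in> L \<Longrightarrow> inverse x \<in> L"
  unfolding real_subfield_def by (cases "x = 0") auto

lemma sf_diff: "real_subfield L \<Longrightarrow> x \<in> L \<Longrightarrow> y \<in> L \<Longrightarrow> x - y \<in> L"
  using sf_add sf_neg by (metis diff_conv_add_uminus)

lemma sf_div: "real_subfield L \<Longrightarrow> x \<in> L \<Longrightarrow> y \<in> L \<Longrightarrow> x / y \<in> L"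
  using sf_mult sf_inv by (metis divide_inverse)

lemma sf_nat: "real_subfield L \<Longrightarrow> real n \<in> L"
  by (induction n) (auto intro: sf_add sf_0 sf_1)

lemma sf_int: "real_subfield L \<Longrightarrow> real_of_int n \<in> L"
  by (cases n) (auto intro: sf_nat sf_neg sf_diff sf_1)

lemma sf_rat: "real_subfield L \<Longrightarrow> r \<in> \<rat> \<Longrightarrow> r \<in> L"
  by (auto elim!: Rats_cases' intro!: sf_div sf_int)

lemma sf_pow: "real_subfield L \<Longrightarrow> x \<in> L \<Longrightarrow> x ^ n \<in> L"
  by (induction n) (auto intro: sf_mult sf_1)

lemma sf_powi: "real_subfield L \<Longrightarrow> x \<in> L \<Longrightarrow> x powi n \<in> L"
  unfolding power_int_def by (auto intro: sf_pow sf_inv)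

lemma norm_exp: "norm1_2 4 c = \<bar>c 0 1\<bar> + \<bar>c 0 2\<bar> + \<bar>c 0 3\<bar> + \<bar>c 1 2\<bar> + \<bar>c 1 3\<bar> + \<bar>c 2 3\<bar>"
proof -
  have "{(i, j). i < j \<and> j < (4::nat)} = {(0,1),(0,2),(0,3),(1,2),(1,3),(2,3)}"
    by (auto simp: less_Suc_eq numeral_eq_Suc)
  then show ?thesis unfolding norm1_2_def by simp
qed

locale aut =
  fixes L and \<sigma> :: "real \<Rightarrow> real"
  assumes sf: "real_subfield L" and fa: "field_aut L \<sigma>"
begin

lemma add: "x \<in> L \<Longrightarrow> y \<in> L \<Longrightarrow> \<sigma> (x + y) = \<sigma> x + \<sigma> y"
  and mult: "x \<in> L \<Longrightarrow> y \<in> L \<Longrightarrow> \<sigma> (x * y) = \<sigma> x * \<sigma> y"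
  and one: "\<sigma> 1 = 1"
  and inL: "x \<in> L \<Longrightarrow> \<sigma> x \<in> L"
  and inj: "inj_on \<sigma> L"
  using fa unfolding field_aut_def bij_betw_def by auto

lemma zero: "\<sigma> 0 = 0"
  using add[of 0 0] sf_0[OF sf] by simp

lemma neg: "x \<in> L \<Longrightarrow> \<sigma> (- x) = - \<sigma> x"
  using add[of x "-x"] sf_neg[OF sf, of x] zero by simp

lemma diff: "x \<in> L \<Longrightarrow> y \<in> L \<Longrightarrow> \<sigma> (x - y) = \<sigma> x - \<sigma> y"
  using add[of x "-y"] neg[of y] sf_neg[OF sf, of y] by simp

lemma nz: "x \<in> L \<Longrightarrow> x \<noteq> 0 \<Longrightarrow> \<sigma> x \<noteq> 0"
  using inj zero sf_0[OF sf] by (metis inj_on_contraD)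

lemma inverse: "x \<in> L \<Longrightarrow> \<sigma> (inverse x) = inverse (\<sigma> x)"
proof (cases "x = 0")
  case True then show ?thesis using zero by simp
next
  case False
  assume x: "x \<in> L"
  have "\<sigma> x * \<sigma> (inverse x) = 1"
    using mult[OF x sf_inv[OF sf x]] False one by simp
  then show ?thesis by (metis inverse_unique)
qed

lemma divide: "x \<in> L \<Longrightarrow> y \<in> L \<Longrightarrow> \<sigma> (x / y) = \<sigma> x / \<sigma> y"
  using mult[of x "inverse y"] inverse[of y] sf_inv[OF sf] by (simp add: divide_inverse)

lemma nat: "\<sigma> (real n) = real n"
  by (induction n) (auto simp: zero one add sf_nat[OF sf] sf_1[OF sf])

lemma int: "\<sigma> (real_of_int n) = real_of_int n"
  by (cases n) (auto simp: nat neg diff one sf_nat[OF sf] sf_1[OF sf] sf_neg[OF sf])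

lemma rat: "r \<in> \<rat> \<Longrightarrow> \<sigma> r = r"
  by (auto elim!: Rats_cases' simp: divide sf_int[OF sf] int)

lemma power: "x \<in> L \<Longrightarrow> \<sigma> (x ^ n) = \<sigma> x ^ n"
proof (induction n)
  case 0 then show ?case using one by simp
next
  case (Suc n)
  have "x ^ n \<in> L" by (induction n) (auto intro: sf_mult[OF sf] sf_1[OF sf] Suc.prems)
  then show ?case using Suc by (simp add: mult)
qed

lemma powi: "x \<in> L \<Longrightarrow> \<sigma> (x powi k) = \<sigma> x powi k"
  unfolding power_int_def using power inverse sf_inv[OF sf] by auto

lemma poly_tr: "x \<in> L \<Longrightarrow> poly (map_poly real_of_int p) x \<in> L \<and>
   \<sigma> (poly (map_poly real_of_int p) x) = poly (map_poly real_of_int p) (\<sigma> x)"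
proof (induction p rule: pCons_induct)
  case 0 then show ?case using zero sf_0[OF sf] by simp
next
  case (pCons a p)
  then show ?case
    by (simp add: map_poly_pCons add mult sf_add[OF sf] sf_mult[OF sf] sf_int[OF sf] int)
qed

lemma alg: "x \<in> L \<Longrightarrow> alg_int x \<Longrightarrow> alg_int (\<sigma> x)"
  unfolding alg_int_def using poly_tr zero by metis

end

lemma quad:
  assumes "rat_dim l 2" "1 \<in> l" "u \<in> l" "u*u \<in> l"
  shows "u \<in> \<rat> \<or> (\<exists>a\<in>\<rat>. \<exists>c\<in>\<rat>. u*u = a*u + c)"
proof -
  obtain b :: "nat \<Rightarrow> real" where l: "l = {(\<Sum>i<2. q i * b i) | q. \<forall>i<2. q i \<in> \<rat>}"
    using assms(1) unfolding rat_dim_def by blast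
  have co: "\<exists>s t. s \<in> \<rat> \<and> t \<in> \<rat> \<and> x = s * b 0 + t * b 1" if xl: "x \<in> l" for x
  proof -
    obtain q where "x = (\<Sum>i<2. q i * b i)" "\<forall>i<2. q i \<in> \<rat>" using xl by (subst (asm) l) blast
    then show ?thesis by (intro exI[of _ "q 0"] exI[of _ "q 1"]) (simp add: numeral_2_eq_2)
  qed
  obtain p0 p1 where p: "p0 \<in> \<rat>" "p1 \<in> \<rat>" "1 = p0 * b 0 + p1 * b 1" using co assms(2) by blast
  obtain q0 q1 where q: "q0 \<in> \<rat>" "q1 \<in> \<rat>" "u = q0 * b 0 + q1 * b 1" using co assms(3) by blast
  obtain r0 r1 where r: "r0 \<in> \<rat>" "r1 \<in> \<rat>" "u*u = r0 * b 0 + r1 * b 1" using co assms(4) by blast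
  show ?thesis
  proof (cases "p0*q1 - p1*q0 = 0")
    case False
    define c0 where "c0 = q0*r1 - q1*r0"
    define c1 where "c1 = -(p0*r1 - p1*r0)"
    define c2 where "c2 = p0*q1 - p1*q0"
    have e: "c0 * 1 + c1 * u + c2 * (u*u) = c0*(p0*b 0+p1*b 1) + c1*(q0*b 0+q1*b 1) + c2*(r0*b 0+r1*b 1)"
      by (simp only: p(3)[symmetric] q(3)[symmetric] r(3)[symmetric])
    have "c0*(p0*b 0+p1*b 1) + c1*(q0*b 0+q1*b 1) + c2*(r0*b 0+r1*b 1) = 0"
      unfolding c0_def c1_def c2_def by algebra
    with e have "c0 * 1 + c1 * u + c2 * (u*u) = 0" by simp
    moreover have "c2 \<noteq> 0" using False unfolding c2_def by simp
    ultimately have "u*u = (-c1/c2) * u + (-c0/c2)"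
      by (simp add: field_simps)
    moreover have "-c1/c2 \<in> \<rat>" "-c0/c2 \<in> \<rat>" unfolding c0_def c1_def c2_def using p q r by auto
    ultimately show ?thesis by blast
  next
    case True
    have "p0 \<noteq> 0 \<or> p1 \<noteq> 0" using p(3) by auto
    then show ?thesis
    proof
      assume h: "p0 \<noteq> 0"
      have "u = (q0/p0) * (p0 * b 0 + p1 * b 1)"
        using True h unfolding q(3) by (simp add: field_simps)
      then have "u = q0/p0" using p(3) by simp
      then show ?thesis using p q by auto
    next
      assume h: "p1 \<noteq> 0"
      have "u = (q1/p1) * (p0 * b 0 + p1 * b 1)"
        using True h unfolding q(3) by (simp add: field_simps)
      then have "u = q1/p1" using p(3) by simp
      then show ?thesis using p q by auto
    qed
  qed
qed

lemma g1: fixes a b :: real shows "8*(a^2+b^2) \<le> (2*max \<bar>a\<bar> \<bar>b\<bar> + \<bar>a\<bar> + \<bar>b\<bar>)^2"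
proof -
  have "a^2 = \<bar>a\<bar>^2" "b^2 = \<bar>b\<bar>^2" by simp_all
  moreover have "8*(p^2+q^2) \<le> (2*max p q + p + q)^2" if "p \<ge> 0" "q \<ge> 0" for p q :: real
  proof (cases "p \<ge> q")
    case True
    have "(p-q)*(p+7*q) \<ge> 0" using True that by simp
    then show ?thesis using True by (simp add: max_def power2_eq_square algebra_simps)
  next
    case False
    have "(q-p)*(q+7*p) \<ge> 0" using False that by simp
    then show ?thesis using False by (simp add: max_def power2_eq_square algebra_simps)
  qed
  ultimately show ?thesis by (metis abs_ge_zero)
qed

lemma g2: fixes a b :: real shows "(2*max \<bar>a\<bar> \<bar>b\<bar> + \<bar>a\<bar> + \<bar>b\<bar>)^2 \<le> 16*(a^2+b^2)"
proof -
  have "a^2 = \<bar>a\<bar>^2" "b^2 = \<bar>b\<bar>^2" by simp_all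
  moreover have "(2*max p q + p + q)^2 \<le> 16*(p^2+q^2)" if "p \<ge> 0" "q \<ge> 0" for p q :: real
  proof -
    have h: "2*(p*q) \<le> p^2+q^2" using sum_squares_bound[of p q] by (simp add: power2_eq_square)
    have "(2*max p q + p + q)^2 \<le> 16*(p^2+q^2)"
    proof (cases "p \<le> q")
      case True
      then have "(2*max p q + p + q)^2 = 9*q^2 + 6*(p*q) + p^2" by (simp add: max_def power2_eq_square algebra_simps)
      then show ?thesis using h that mult_nonneg_nonneg[of p p] mult_nonneg_nonneg[of q q] by (simp add: power2_eq_square, linarith) 
    next
      case False
      then have "(2*max p q + p + q)^2 = 9*p^2 + 6*(p*q) + q^2" by (simp add: max_def power2_eq_square algebra_simps)
      then show ?thesis using h that mult_nonneg_nonneg[of p p] mult_nonneg_nonneg[of q q] by (simp add: power2_eq_square, linarith)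
    qed
    then show ?thesis .
  qed
  ultimately show ?thesis by (metis abs_ge_zero)
qed

lemma key:
  fixes x y :: int and W2 W3 :: real
  assumes "(x, y) \<noteq> (0, 0)"
  shows "2*max \<bar>W2\<bar> \<bar>W3\<bar> + \<bar>W2\<bar> + \<bar>W3\<bar> \<le>
     2*max \<bar>x*W2 + y*W3\<bar> \<bar>x*W3 - y*W2\<bar> + \<bar>x*W2 + y*W3\<bar> + \<bar>x*W3 - y*W2\<bar>"
proof (cases "x^2 + y^2 \<ge> 2")
  case True
  define A where "A = x*W2 + y*W3"
  define B where "B = x*W3 - y*W2"
  have AB: "A^2 + B^2 = (real_of_int x^2 + real_of_int y^2) * (W2^2+W3^2)" unfolding A_def B_def by (simp add: power2_eq_square algebra_simps)
  have "real_of_int (x^2 + y^2) \<ge> 2" using True by linarith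
  then have "real_of_int x^2 + real_of_int y^2 \<ge> 2" by simp
  then have "2*(W2^2+W3^2) \<le> (real_of_int x^2 + real_of_int y^2) * (W2^2+W3^2)"
    by (intro mult_right_mono) auto
  then have h: "16*(W2^2+W3^2) \<le> 8*(A^2+B^2)" unfolding AB by linarith
  have "(2*max \<bar>W2\<bar> \<bar>W3\<bar> + \<bar>W2\<bar> + \<bar>W3\<bar>)^2 \<le> (2*max \<bar>A\<bar> \<bar>B\<bar> + \<bar>A\<bar> + \<bar>B\<bar>)^2"
    using g1[of A B] g2[of W2 W3] h by linarith
  then show ?thesis unfolding A_def B_def
    by (rule power2_le_imp_le) simp
next
  case False
  then have x1: "x^2 \<le> 1" and y1: "y^2 \<le> 1" using zero_le_power2[of x] zero_le_power2[of y] by linarith+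
  have "\<bar>x\<bar> \<le> 1" "\<bar>y\<bar> \<le> 1" using x1 y1 abs_square_le_1 by blast+
  then have xs: "x = -1 \<or> x = 0 \<or> x = 1" and ys: "y = -1 \<or> y = 0 \<or> y = 1" by linarith+
  show ?thesis using xs ys assms False by (elim disjE) (auto simp: max_def)
qed

lemma triP: "u + v = (c::real) \<Longrightarrow> \<bar>c\<bar> \<le> \<bar>u\<bar> + \<bar>v\<bar>"
  using abs_triangle_ineq[of u v] by simp
lemma triM: "u - v = (c::real) \<Longrightarrow> \<bar>c\<bar> \<le> \<bar>u\<bar> + \<bar>v\<bar>"
  using abs_triangle_ineq4[of u v] by simp

lemma final:
  fixes W1 W2 W3 e S :: real and x y z :: int
  assumes e: "e = 1 \<or> e = -1" and W1: "W1 > 0" and S: "S = W2^2 + W3^2"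
  defines "A \<equiv> x*W2 + y*W3" and "B \<equiv> x*W3 - y*W2"
  defines "T \<equiv> \<bar>W1*(B - e*A) - z*S\<bar> + \<bar>-2*W1*A\<bar> + \<bar>-W1*(B+e*A) + z*S\<bar>
     + \<bar>-W1*(e*A+B) - z*S\<bar> + \<bar>-2*e*W1*B\<bar> + \<bar>W1*(e*A - B) - z*S\<bar>"
  shows "T \<ge> 4 * \<bar>of_int z\<bar> * (W2^2 + W3^2) \<and>
    ((x, y) \<noteq> (0, 0) \<longrightarrow> T \<ge> 2 * W1 * (2 * max \<bar>W2\<bar> \<bar>W3\<bar> + \<bar>W2\<bar> + \<bar>W3\<bar>))"
proof
  have S0: "S \<ge> 0" using S by simp
  have zS: "\<bar>-2*z*S\<bar> = 2*\<bar>z\<bar>*S" "\<bar>2*z*S\<bar> = 2*\<bar>z\<bar>*S" using S0 by (simp_all add: abs_mult)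
  have t1: "\<bar>-2*z*S\<bar> \<le> \<bar>W1*(B - e*A) - z*S\<bar> + \<bar>W1*(e*A - B) - z*S\<bar>"
    by (rule triP) (simp add: algebra_simps)
  have t2: "\<bar>2*z*S\<bar> \<le> \<bar>-W1*(B+e*A) + z*S\<bar> + \<bar>-W1*(e*A+B) - z*S\<bar>"
    by (rule triM) (simp add: algebra_simps)
  have nn: "\<bar>-2*W1*A\<bar> \<ge> 0" "\<bar>-2*e*W1*B\<bar> \<ge> 0" by simp_all
  show "T \<ge> 4 * \<bar>of_int z\<bar> * (W2^2 + W3^2)" proof -
    have "4 * \<bar>of_int z\<bar> * (W2^2 + W3^2) = 2*\<bar>z\<bar>*S + 2*\<bar>z\<bar>*S" using S by simp
    then show ?thesis unfolding T_def using t1 t2 zS nn by linarith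
  qed
  show "(x, y) \<noteq> (0, 0) \<longrightarrow> T \<ge> 2 * W1 * (2 * max \<bar>W2\<bar> \<bar>W3\<bar> + \<bar>W2\<bar> + \<bar>W3\<bar>)"
  proof
    assume xy: "(x, y) \<noteq> (0, 0)"
    have s1: "\<bar>2*W1*(B - e*A)\<bar> \<le> \<bar>W1*(B - e*A) - z*S\<bar> + \<bar>W1*(e*A - B) - z*S\<bar>"
      by (rule triM) (simp add: algebra_simps)
    have s2: "\<bar>-2*W1*(B + e*A)\<bar> \<le> \<bar>-W1*(B+e*A) + z*S\<bar> + \<bar>-W1*(e*A+B) - z*S\<bar>"
      by (rule triP) (simp add: algebra_simps)
    have a1: "\<bar>2*W1*(B - e*A)\<bar> = 2*W1*\<bar>B - e*A\<bar>" "\<bar>-2*W1*(B + e*A)\<bar> = 2*W1*\<bar>B + e*A\<bar>"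
      using W1 by (simp_all add: abs_mult)
    have s3: "\<bar>B - e*A\<bar> + \<bar>B + e*A\<bar> = 2*max \<bar>A\<bar> \<bar>B\<bar>" using e
      by (auto simp: max_def abs_if)
    have s4: "\<bar>-2*W1*A\<bar> + \<bar>-2*e*W1*B\<bar> = 2*W1*(\<bar>A\<bar>+\<bar>B\<bar>)" using e W1
      by (auto simp: abs_mult algebra_simps)
    have "T \<ge> 2*W1*(\<bar>B - e*A\<bar> + \<bar>B + e*A\<bar>) + 2*W1*(\<bar>A\<bar>+\<bar>B\<bar>)"
      unfolding T_def using s1 s2 a1 s4 by (simp add: algebra_simps)
    then have "T \<ge> 2*W1*(2*max \<bar>A\<bar> \<bar>B\<bar> + \<bar>A\<bar> + \<bar>B\<bar>)"
      unfolding s3 by (simp add: algebra_simps)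
    moreover have "2*max \<bar>W2\<bar> \<bar>W3\<bar> + \<bar>W2\<bar> + \<bar>W3\<bar> \<le> 2*max \<bar>A\<bar> \<bar>B\<bar> + \<bar>A\<bar> + \<bar>B\<bar>"
      unfolding A_def B_def by (rule key[OF xy])
    ultimately show "T \<ge> 2 * W1 * (2 * max \<bar>W2\<bar> \<bar>W3\<bar> + \<bar>W2\<bar> + \<bar>W3\<bar>)"
      using W1 mult_left_mono[of _ _ "2*W1"] by (smt (verit))
  qed
qed

theorem mainTheorem8:
  fixes L l :: "real set" and \<sigma> :: "real \<Rightarrow> real" and u_l u\<^sub>0 :: real and n\<^sub>1 n\<^sub>2 n\<^sub>3 :: int
  assumes L_field: "real_subfield L" and L_deg: "rat_dim L 4"
    and \<sigma>_aut: "field_aut L \<sigma>"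
    and \<sigma>_order4: "\<forall>x\<in>L. (\<sigma> ^^ 4) x = x" "\<exists>x\<in>L. (\<sigma> ^^ 2) x \<noteq> x"
    and Gal_gen: "\<forall>g. field_aut L g \<longrightarrow> (\<exists>k<4. \<forall>x\<in>L. g x = (\<sigma> ^^ k) x)"
    and l_field: "real_subfield l" "l \<subseteq> L" and l_deg: "rat_dim l 2"
    and ul_unit: "int_unit l u_l" and ul_gt1: "u_l > 1"
    and ul_fund: "\<forall>\<epsilon>. int_unit l \<epsilon> \<longrightarrow> (\<exists>k::int. \<epsilon> = u_l powi k \<or> \<epsilon> = - (u_l powi k))"
    and u0_unit: "int_unit L u\<^sub>0" and u0_ne: "u\<^sub>0 \<noteq> 1" "u\<^sub>0 \<noteq> -1"
    and u0_norm: "u\<^sub>0 * \<sigma> (\<sigma> u\<^sub>0) = 1 \<or> u\<^sub>0 * \<sigma> (\<sigma> u\<^sub>0) = -1"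
  defines "W\<^sub>1 \<equiv> ln u_l" and "W\<^sub>2 \<equiv> ln \<bar>u\<^sub>0\<bar>" and "W\<^sub>3 \<equiv> ln \<bar>\<sigma> u\<^sub>0\<bar>"
    and "w \<equiv> (\<lambda>i j. of_int n\<^sub>1 * wedge (LOG4 \<sigma> u_l) (LOG4 \<sigma> u\<^sub>0) i j
                  + of_int n\<^sub>2 * wedge (LOG4 \<sigma> u_l) (LOG4 \<sigma> (\<sigma> u\<^sub>0)) i j
                  + of_int n\<^sub>3 * wedge (LOG4 \<sigma> u\<^sub>0) (LOG4 \<sigma> (\<sigma> u\<^sub>0)) i j)"
  shows "norm1_2 4 w \<ge> 4 * \<bar>of_int n\<^sub>3\<bar> * (W\<^sub>2\<^sup>2 + W\<^sub>3\<^sup>2) \<and>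
         ((n\<^sub>1, n\<^sub>2) \<noteq> (0, 0) \<longrightarrow>
           norm1_2 4 w \<ge> 2 * W\<^sub>1 * (2 * max \<bar>W\<^sub>2\<bar> \<bar>W\<^sub>3\<bar> + \<bar>W\<^sub>2\<bar> + \<bar>W\<^sub>3\<bar>))"
  proof -
  interpret aut L \<sigma> using L_field \<sigma>_aut by unfold_locales
  have f2: "(\<sigma>^^2) x = \<sigma> (\<sigma> x)" and f3: "(\<sigma>^^3) x = \<sigma> (\<sigma> (\<sigma> x))"
    and f4: "(\<sigma>^^4) x = \<sigma> (\<sigma> (\<sigma> (\<sigma> x)))" for x by (simp_all add: eval_nat_numeral)
  have ul_l: "u_l \<in> l" using ul_unit unfolding int_unit_def by simp
  have ulL: "u_l \<in> L" using ul_l l_field(2) by auto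
  have u0L: "u\<^sub>0 \<in> L" and u0nz: "u\<^sub>0 \<noteq> 0" using u0_unit unfolding int_unit_def by auto
  have lnprod: "ln \<bar>x\<bar> + ln \<bar>y\<bar> = 0" if "x * y = 1 \<or> x * y = -1" for x y :: real
  proof -
    have "\<bar>x\<bar> * \<bar>y\<bar> = 1" using that by (auto simp: abs_mult[symmetric])
    moreover then have "\<bar>x\<bar> \<noteq> 0" "\<bar>y\<bar> \<noteq> 0" by auto
    ultimately show ?thesis using ln_mult[of "\<bar>x\<bar>" "\<bar>y\<bar>"] by simp
  qed
  have A: "\<sigma> u_l \<in> l \<and> \<sigma> (\<sigma> u_l) = u_l"
  proof -
    have "u_l \<in> \<rat> \<or> (\<exists>a\<in>\<rat>. \<exists>c\<in>\<rat>. u_l*u_l = a*u_l + c)"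
      by (rule quad[OF l_deg sf_1[OF l_field(1)] ul_l sf_mult[OF l_field(1) ul_l ul_l]])
    then show ?thesis
    proof
      assume "u_l \<in> \<rat>" then show ?thesis using rat ul_l by simp
    next
      assume "\<exists>a\<in>\<rat>. \<exists>c\<in>\<rat>. u_l*u_l = a*u_l + c"
      then obtain a c where ac: "a \<in> \<rat>" "c \<in> \<rat>" "u_l*u_l = a*u_l + c" by blast
      have aL: "a \<in> L" "c \<in> L" using ac sf_rat[OF sf] by auto
      have m1: "\<sigma> (u_l*u_l) = \<sigma> u_l * \<sigma> u_l" by (rule mult[OF ulL ulL])
      have m2: "\<sigma> (a*u_l + c) = a * \<sigma> u_l + c"
        using add[OF sf_mult[OF sf aL(1) ulL] aL(2)] mult[OF aL(1) ulL] rat[OF ac(1)] rat[OF ac(2)] by simp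
      have "\<sigma> u_l * \<sigma> u_l = a * \<sigma> u_l + c" using m1 m2 ac(3) by simp
      then have "(\<sigma> u_l - u_l) * (\<sigma> u_l + u_l - a) = 0" using ac(3)
        by (simp add: algebra_simps)
      then have "\<sigma> u_l = u_l \<or> \<sigma> u_l = a - u_l" by auto
      then show ?thesis
      proof
        assume "\<sigma> u_l = u_l" then show ?thesis using ul_l by simp
      next
        assume h: "\<sigma> u_l = a - u_l"
        have "a - u_l \<in> l" using sf_diff[OF l_field(1) sf_rat[OF l_field(1) ac(1)] ul_l] .
        moreover have "\<sigma> (a - u_l) = u_l" using diff[OF aL(1) ulL] h rat[OF ac(1)] by simp
        ultimately show ?thesis using h by simp
      qed
    qed
  qed
  have "int_unit l (\<sigma> u_l)"
  proof -
    have "alg_int u_l" "alg_int (inverse u_l)" "u_l \<noteq> 0" using ul_unit unfolding int_unit_def by auto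
    then have "alg_int (\<sigma> u_l)" "alg_int (\<sigma> (inverse u_l))" "\<sigma> u_l \<noteq> 0"
      using alg ulL sf_inv[OF sf ulL] nz by auto
    then show ?thesis unfolding int_unit_def using A inverse[OF ulL] by simp
  qed
  then obtain k :: int where k: "\<sigma> u_l = u_l powi k \<or> \<sigma> u_l = - (u_l powi k)" using ul_fund by blast
  have W1pos: "W\<^sub>1 > 0" unfolding W\<^sub>1_def using ul_gt1 by simp
  have abs1: "\<bar>\<sigma> u_l\<bar> = u_l powi k" using k ul_gt1 by (auto simp: power_int_abs)
  have lnpowi: "ln (x powi m) = of_int m * ln x" if "x > 0" for x :: real and m
  proof -
    have "x powi m = x powr of_int m" using powr_real_of_int'[of x m] that by simp
    then show ?thesis by simp
  qed
  have L1: "ln \<bar>\<sigma> u_l\<bar> = of_int k * W\<^sub>1" unfolding abs1 W\<^sub>1_def using ul_gt1 lnpowi by simp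
  have "\<sigma> (\<sigma> u_l) = \<sigma> u_l powi k \<or> \<sigma> (\<sigma> u_l) = - (\<sigma> u_l powi k)"
    using k
  proof
    assume "\<sigma> u_l = u_l powi k" then show ?thesis using powi[OF ulL] by simp
  next
    assume "\<sigma> u_l = - (u_l powi k)" then show ?thesis using powi[OF ulL] neg[OF sf_powi[OF sf ulL]] by simp
  qed
  then have "\<bar>\<sigma> (\<sigma> u_l)\<bar> = \<bar>\<sigma> u_l\<bar> powi k" by (auto simp: power_int_abs)
  moreover have "\<bar>\<sigma> u_l\<bar> > 0" using abs1 ul_gt1 by simp
  ultimately have "ln \<bar>\<sigma> (\<sigma> u_l)\<bar> = of_int k * ln \<bar>\<sigma> u_l\<bar>" using lnpowi by simp
  then have "W\<^sub>1 = of_int k * (of_int k * W\<^sub>1)" using A L1 ul_gt1 unfolding W\<^sub>1_def by simp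
  then have "(of_int k - 1) * (of_int k + 1) * W\<^sub>1 = (0::real)" by (simp add: algebra_simps)
  then have e: "of_int k = (1::real) \<or> of_int k = (-1::real)" using W1pos by auto
  define e where "e = (of_int k :: real)"
  have ee: "e = 1 \<or> e = -1" using e unfolding e_def .
  have La0: "LOG4 \<sigma> u_l 0 = W\<^sub>1" unfolding LOG4_def W\<^sub>1_def using ul_gt1 by simp
  have La1: "LOG4 \<sigma> u_l 1 = e * W\<^sub>1" unfolding LOG4_def e_def using L1 by simp
  have La2: "LOG4 \<sigma> u_l 2 = W\<^sub>1" unfolding LOG4_def f2 W\<^sub>1_def using A ul_gt1 by simp
  have La3: "LOG4 \<sigma> u_l 3 = e * W\<^sub>1" unfolding LOG4_def f3 e_def using A L1 by simp
  have su0L: "\<sigma> u\<^sub>0 \<in> L" "\<sigma> (\<sigma> u\<^sub>0) \<in> L" using u0L inL by auto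
  have p2: "ln \<bar>u\<^sub>0\<bar> + ln \<bar>\<sigma> (\<sigma> u\<^sub>0)\<bar> = 0" using lnprod u0_norm by blast
  have "\<sigma> (u\<^sub>0 * \<sigma> (\<sigma> u\<^sub>0)) = 1 \<or> \<sigma> (u\<^sub>0 * \<sigma> (\<sigma> u\<^sub>0)) = -1"
    using u0_norm one neg[OF sf_1[OF sf]] by auto
  then have "\<sigma> u\<^sub>0 * \<sigma> (\<sigma> (\<sigma> u\<^sub>0)) = 1 \<or> \<sigma> u\<^sub>0 * \<sigma> (\<sigma> (\<sigma> u\<^sub>0)) = -1"
    using mult[OF u0L su0L(2)] by simp
  then have p3: "ln \<bar>\<sigma> u\<^sub>0\<bar> + ln \<bar>\<sigma> (\<sigma> (\<sigma> u\<^sub>0))\<bar> = 0" using lnprod by blast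
  have o4: "\<sigma> (\<sigma> (\<sigma> (\<sigma> u\<^sub>0))) = u\<^sub>0" using \<sigma>_order4(1) u0L f4[of u\<^sub>0] by simp
  have Lb0: "LOG4 \<sigma> u\<^sub>0 0 = W\<^sub>2" unfolding LOG4_def W\<^sub>2_def by simp
  have Lb1: "LOG4 \<sigma> u\<^sub>0 1 = W\<^sub>3" unfolding LOG4_def W\<^sub>3_def by simp
  have Lb2: "LOG4 \<sigma> u\<^sub>0 2 = - W\<^sub>2" unfolding LOG4_def f2 W\<^sub>2_def using p2 by simp
  have Lb3: "LOG4 \<sigma> u\<^sub>0 3 = - W\<^sub>3" unfolding LOG4_def f3 W\<^sub>3_def using p3 by simp
  have Lc0: "LOG4 \<sigma> (\<sigma> u\<^sub>0) 0 = W\<^sub>3" unfolding LOG4_def W\<^sub>3_def by simp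
  have Lc1: "LOG4 \<sigma> (\<sigma> u\<^sub>0) 1 = - W\<^sub>2" unfolding LOG4_def W\<^sub>2_def using p2 by simp
  have Lc2: "LOG4 \<sigma> (\<sigma> u\<^sub>0) 2 = - W\<^sub>3" unfolding LOG4_def f2 W\<^sub>3_def using p3 by simp
  have Lc3: "LOG4 \<sigma> (\<sigma> u\<^sub>0) 3 = W\<^sub>2" unfolding LOG4_def f3 W\<^sub>2_def using o4 by simp
  define S where "S = W\<^sub>2^2 + W\<^sub>3^2"
  define Aa where "Aa = of_int n\<^sub>1 * W\<^sub>2 + of_int n\<^sub>2 * W\<^sub>3"
  define Bb where "Bb = of_int n\<^sub>1 * W\<^sub>3 - of_int n\<^sub>2 * W\<^sub>2"
  note Ls = La0 La1 La2 La3 Lb0 Lb1 Lb2 Lb3 Lc0 Lc1 Lc2 Lc3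
  have w01: "w 0 1 = W\<^sub>1*(Bb - e*Aa) - of_int n\<^sub>3*S"
    unfolding w_def wedge_def Ls Aa_def Bb_def S_def by (simp add: power2_eq_square algebra_simps)
  have w02: "w 0 2 = -2*W\<^sub>1*Aa"
    unfolding w_def wedge_def Ls Aa_def Bb_def S_def by (simp add: power2_eq_square algebra_simps)
  have w03: "w 0 3 = -W\<^sub>1*(Bb+e*Aa) + of_int n\<^sub>3*S"
    unfolding w_def wedge_def Ls Aa_def Bb_def S_def by (simp add: power2_eq_square algebra_simps)
  have w12: "w 1 2 = -W\<^sub>1*(e*Aa+Bb) - of_int n\<^sub>3*S"
    unfolding w_def wedge_def Ls Aa_def Bb_def S_def by (simp add: power2_eq_square algebra_simps)
  have w13: "w 1 3 = -2*e*W\<^sub>1*Bb"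
    using ee unfolding w_def wedge_def Ls Aa_def Bb_def S_def by (auto simp: power2_eq_square algebra_simps)
  have w23: "w 2 3 = W\<^sub>1*(e*Aa - Bb) - of_int n\<^sub>3*S"
    unfolding w_def wedge_def Ls Aa_def Bb_def S_def by (simp add: power2_eq_square algebra_simps)
  have N: "norm1_2 4 w = \<bar>W\<^sub>1*(Bb - e*Aa) - of_int n\<^sub>3*S\<bar> + \<bar>-2*W\<^sub>1*Aa\<bar> + \<bar>-W\<^sub>1*(Bb+e*Aa) + of_int n\<^sub>3*S\<bar>
     + \<bar>-W\<^sub>1*(e*Aa+Bb) - of_int n\<^sub>3*S\<bar> + \<bar>-2*e*W\<^sub>1*Bb\<bar> + \<bar>W\<^sub>1*(e*Aa - Bb) - of_int n\<^sub>3*S\<bar>"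
    unfolding norm_exp w01 w02 w03 w12 w13 w23 ..
  note F = final[OF ee W1pos S_def, where x = n\<^sub>1 and y = n\<^sub>2 and z = n\<^sub>3, folded Aa_def Bb_def]
  show ?thesis unfolding N by (rule F)
qed

end
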